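(* Let $\rho$ be a representation of $D^{2,2,2}$ and let $\{i,j,k\}=\{1,2,3\}$. 1. Suppose $a,b\in D^{2,2,2}$ satisfy one of the following: (i) $x_i+x_jx_k\subseteq a$; (ii) $x_i+x_jx_k\subseteq b$; (iii) $x_i\subseteq a$ and $x_jx_k\subseteq b$; (iv) $x_i\subseteq b$ and $x_jx_k\subseteq a$. Then $\psi_i(ab)=\psi_i(a)\cap\psi_i(b)$ (and $\psi_i(a+b)=\psi_i(a)+\psi_i(b)$). 2. For every $n\ge 0$ and every $b\in D^{2,2,2}$: $$\psi_i(ba^{ij}_n)=\psi_i(b)\cap\psi_i(a^{ij}_n),\qquad \psi_j(ba^{ij}_n)=\psi_j(b)\cap\psi_j(a^{ij}_n),\qquad \psi_i(bA^{ij}_n)=\psi_i(b)\cap\psi_i(A^{ij}_n).$$ 3. For every $b\in D^{2,2,2}$, $\psi_i(b+x_i)=\psi_i(b)$.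
   Context: $D^{2,2,2}$ is the modular lattice generated by $x_1,y_1,x_2,y_2,x_3,y_3$ subject only to $x_i\subseteq y_i$ ($i=1,2,3$), with a greatest element $I$ adjoined. Meet is written $ab$, join $a+b$. Atomic elements: for distinct $i,j$, let $k$ denote the third index. Define - $a^{ij}_0=I$ and $a^{ij}_n=x_i+y_ja^{jk}_{n-1}$ for $n\ge1$; - $A^{ij}_0=I$ and $A^{ij}_n=y_i+x_jA^{ki}_{n-1}$ for $n\ge1$. A representation $\rho$ of $D^{2,2,2}$ in a finite-dimensional vector space $X_0$ is a lattice morphism from $D^{2,2,2}$ to the subspace lattice of $X_0$, with $\rho(I)=X_0$. Write $X_i=\rho(x_i)\subseteq Y_i=\rho(y_i)$. Put $R=Y_1\oplus Y_2\oplus Y_3$ and $X^1_0=\{(\eta_1,\eta_2,\eta_3)\in R:\sum\eta_i=0\}$. Define subspaces of $R$: - $G_i$: triples with $i$-th coordinate in $Y_i$ and the others $0$; - $G'_i$: triples with $i$-th coordinate in $X_i$; - $H'_i$: triples with $i$-th coordinate $0$. $\Phi^+\rho$ is the representation in $X^1_0$ with $\Phi^+\rho(y_i)=G'_i\cap X^1_0$, $\Phi^+\rho(x_i)=H'_i\cap X^1_0$, $\Phi^+\rho(I)=X^1_0$. Set $\nu^1(a)=\Phi^+\rho(a)\subseteq R$. The joint map is $\psi_i(a)=X^1_0+G_i\cap(H'_i+\nu^1(a))$. *)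

theory Defs
  imports Complex_Main "HOL-Library.Function_Algebras"
begin

datatype ix = i1 | i2 | i3

fun third :: "ix \<Rightarrow> ix \<Rightarrow> ix" where
  "third i1 i2 = i3" | "third i2 i1 = i3"
| "third i1 i3 = i2" | "third i3 i1 = i2"
| "third i2 i3 = i1" | "third i3 i2 = i1"
| "third i j = i"

text \<open>Lattice terms over the generators x_i, y_i and the adjoined top I.
  Meet is written ab in the paper, join a+b.\<close>
datatype lterm = Xg ix | Yg ix | Top | Meet lterm lterm | Join lterm lterm

text \<open>Its quotient is the free modular lattice with top
  generated by x_i \<le> y_i.\<close>
inductive leD :: "lterm \<Rightarrow> lterm \<Rightarrow> bool" where
  leD_refl: "leD a a"
| leD_trans: "leD a b \<Longrightarrow> leD b c \<Longrightarrow> leD a c"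
| leD_meet1: "leD (Meet a b) a"
| leD_meet2: "leD (Meet a b) b"
| leD_meet_glb: "leD c a \<Longrightarrow> leD c b \<Longrightarrow> leD c (Meet a b)"
| leD_join1: "leD a (Join a b)"
| leD_join2: "leD b (Join a b)"
| leD_join_lub: "leD a c \<Longrightarrow> leD b c \<Longrightarrow> leD (Join a b) c"
| leD_top: "leD a Top"
| leD_gen: "leD (Xg i) (Yg i)"
| leD_modular: "leD a c \<Longrightarrow> leD (Meet (Join a b) c) (Join a (Meet b c))"

fun a_el :: "ix \<Rightarrow> ix \<Rightarrow> nat \<Rightarrow> lterm" where
  "a_el i j 0 = Top"
| "a_el i j (Suc n) = Join (Xg i) (Meet (Yg j) (a_el j (third i j) n))"

fun A_el :: "ix \<Rightarrow> ix \<Rightarrow> nat \<Rightarrow> lterm" where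
  "A_el i j 0 = Top"
| "A_el i j (Suc n) = Join (Yg i) (Meet (Xg j) (A_el (third i j) i n))"

definition ssum :: "'a::plus set \<Rightarrow> 'a set \<Rightarrow> 'a set" where
  "ssum A B = {a + b | a b. a \<in> A \<and> b \<in> B}"

text \<open>A representation (lattice morphism from the free lattice) is determined by
  the images of the generators and of I: it is term evaluation.\<close>
fun eval :: "'a::plus set \<Rightarrow> (ix \<Rightarrow> 'a set) \<Rightarrow> (ix \<Rightarrow> 'a set) \<Rightarrow> lterm \<Rightarrow> 'a set" where
  "eval T X Y (Xg i) = X i"
| "eval T X Y (Yg i) = Y i"
| "eval T X Y Top = T"
| "eval T X Y (Meet a b) = eval T X Y a \<inter> eval T X Y b"
| "eval T X Y (Join a b) = ssum (eval T X Y a) (eval T X Y b)"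

text \<open>Triples (eta_1, eta_2, eta_3) are functions ix \<Rightarrow> 'v.\<close>
definition Rsp :: "(ix \<Rightarrow> 'v::ab_group_add set) \<Rightarrow> (ix \<Rightarrow> 'v) set" where
  "Rsp Y = {\<eta>. \<forall>t. \<eta> t \<in> Y t}"

definition X10 :: "(ix \<Rightarrow> 'v::ab_group_add set) \<Rightarrow> (ix \<Rightarrow> 'v) set" where
  "X10 Y = {\<eta> \<in> Rsp Y. \<eta> i1 + \<eta> i2 + \<eta> i3 = 0}"

definition Gsp :: "(ix \<Rightarrow> 'v::ab_group_add set) \<Rightarrow> ix \<Rightarrow> (ix \<Rightarrow> 'v) set" where
  "Gsp Y i = {\<eta>. \<eta> i \<in> Y i \<and> (\<forall>t. t \<noteq> i \<longrightarrow> \<eta> t = 0)}"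

definition G'sp :: "(ix \<Rightarrow> 'v::ab_group_add set) \<Rightarrow> (ix \<Rightarrow> 'v set) \<Rightarrow> ix \<Rightarrow> (ix \<Rightarrow> 'v) set" where
  "G'sp X Y i = {\<eta> \<in> Rsp Y. \<eta> i \<in> X i}"

definition H'sp :: "(ix \<Rightarrow> 'v::ab_group_add set) \<Rightarrow> ix \<Rightarrow> (ix \<Rightarrow> 'v) set" where
  "H'sp Y i = {\<eta> \<in> Rsp Y. \<eta> i = 0}"

definition nu1 :: "(ix \<Rightarrow> 'v::ab_group_add set) \<Rightarrow> (ix \<Rightarrow> 'v set) \<Rightarrow> lterm \<Rightarrow> (ix \<Rightarrow> 'v) set" where
  "nu1 X Y a = eval (X10 Y) (\<lambda>i. H'sp Y i \<inter> X10 Y) (\<lambda>i. G'sp X Y i \<inter> X10 Y) a"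

definition psi :: "(ix \<Rightarrow> 'v::ab_group_add set) \<Rightarrow> (ix \<Rightarrow> 'v set) \<Rightarrow> ix \<Rightarrow> lterm \<Rightarrow> (ix \<Rightarrow> 'v) set" where
  "psi X Y i a = ssum (X10 Y) (Gsp Y i \<inter> ssum (H'sp Y i) (nu1 X Y a))"

end

theory Submission
  imports Defs
begin

definition grp :: "'v::ab_group_add set \<Rightarrow> bool" where
  "grp S \<longleftrightarrow> 0 \<in> S \<and> (\<forall>x\<in>S. \<forall>y\<in>S. x + y \<in> S) \<and> (\<forall>x\<in>S. - x \<in> S)"

lemma grpD: assumes "grp S" shows "0 \<in> S" "x \<in> S \<Longrightarrow> y \<in> S \<Longrightarrow> x + y \<in> S"
  "x \<in> S \<Longrightarrow> - x \<in> S" "x \<in> S \<Longrightarrow> y \<in> S \<Longrightarrow> x - y \<in> S"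
  using assms unfolding grp_def by (simp_all, metis diff_conv_add_uminus)

lemma grp_int: "grp A \<Longrightarrow> grp B \<Longrightarrow> grp (A \<inter> B)"
  unfolding grp_def by auto

lemma grp_ssum: assumes "grp A" "grp B" shows "grp (ssum A B)"
  unfolding grp_def ssum_def
proof (intro conjI ballI)
  show "0 \<in> {a + b |a b. a \<in> A \<and> b \<in> B}" using assms by (force simp: grp_def)
next
  fix x y assume "x \<in> {a + b |a b. a \<in> A \<and> b \<in> B}" "y \<in> {a + b |a b. a \<in> A \<and> b \<in> B}"
  then obtain a b a' b' where "x = a + b" "y = a' + b'" "a \<in> A" "b \<in> B" "a' \<in> A" "b' \<in> B" by blast
  then show "x + y \<in> {a + b |a b. a \<in> A \<and> b \<in> B}"
    using assms by (intro CollectI exI[of _ "a+a'"] exI[of _ "b+b'"]) (auto simp: grp_def algebra_simps)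
next
  fix x assume "x \<in> {a + b |a b. a \<in> A \<and> b \<in> B}"
  then obtain a b where "x = a + b" "a \<in> A" "b \<in> B" by blast
  then show "- x \<in> {a + b |a b. a \<in> A \<and> b \<in> B}"
    using assms by (intro CollectI exI[of _ "-a"] exI[of _ "-b"]) (auto simp: grp_def algebra_simps)
qed

lemma ssumI: "a \<in> A \<Longrightarrow> b \<in> B \<Longrightarrow> x = a + b \<Longrightarrow> x \<in> ssum A B"
  unfolding ssum_def by blast

lemma ssumE: assumes "x \<in> ssum A B" obtains a b where "x = a + b" "a \<in> A" "b \<in> B"
  using assms unfolding ssum_def by blast

locale evsetup =
  fixes T :: "'v::ab_group_add set" and X Y :: "ix \<Rightarrow> 'v set"
  assumes gT: "grp T" and gX: "\<And>i. grp (X i)" and gY: "\<And>i. grp (Y i)"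
    and XY: "\<And>i. X i \<subseteq> Y i" and YT: "\<And>i. Y i \<subseteq> T"
begin

lemma ev_grp: "grp (eval T X Y a)"
  by (induction a) (simp_all add: grp_int grp_ssum gT gX gY)

lemma ev_T: "eval T X Y a \<subseteq> T"
proof (induction a)
  case (Join a b)
  then show ?case using gT by (auto simp: ssum_def grp_def)
qed (use XY YT in auto)

lemma ev_mono: "leD a b \<Longrightarrow> eval T X Y a \<subseteq> eval T X Y b"
proof (induction rule: leD.induct)
  case (leD_join1 a b)
  then show ?case using grpD(1)[OF ev_grp[of b]] by (force simp: ssum_def)
next
  case (leD_join2 b a)
  then show ?case using grpD(1)[OF ev_grp[of a]] by (force simp: ssum_def)
next
  case (leD_join_lub a c b)
  then show ?case using grpD(2)[OF ev_grp[of c]] by (auto simp: ssum_def)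
next
  case (leD_top a) then show ?case using ev_T by simp
next
  case (leD_gen i) then show ?case using XY by auto
next
  case (leD_modular a c b)
  show ?case
  proof
    fix x assume "x \<in> eval T X Y (Meet (Join a b) c)"
    then obtain p q where pq: "x = p + q" "p \<in> eval T X Y a" "q \<in> eval T X Y b" "x \<in> eval T X Y c"
      by (auto simp: ssum_def)
    have "q = x - p" using pq by simp
    moreover have "x - p \<in> eval T X Y c" using grpD(4)[OF ev_grp[of c]] pq leD_modular.IH by blast
    ultimately have "q \<in> eval T X Y c" by simp
    then show "x \<in> eval T X Y (Join a (Meet b c))" using pq by (auto simp: ssum_def)
  qed
qed auto

end

lemma Rsp_grp: "(\<And>t. grp (Y t)) \<Longrightarrow> grp (Rsp Y)"
  unfolding grp_def Rsp_def by auto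

lemma X10_grp: assumes gY: "\<And>t. grp (Y t)" shows "grp (X10 Y)"
  unfolding grp_def
proof (intro conjI ballI)
  show "0 \<in> X10 Y" using grpD(1)[OF gY] by (simp add: X10_def Rsp_def)
next
  fix x y assume "x \<in> X10 Y" "y \<in> X10 Y"
  moreover have "(x+y) i1 + (x+y) i2 + (x+y) i3 = (x i1 + x i2 + x i3) + (y i1 + y i2 + y i3)"
    by (simp add: algebra_simps)
  ultimately show "x + y \<in> X10 Y" using grpD(2)[OF gY] by (simp add: X10_def Rsp_def)
next
  fix x assume "x \<in> X10 Y"
  moreover have "(-x) i1 + (-x) i2 + (-x) i3 = - (x i1 + x i2 + x i3)"
    by (simp add: algebra_simps)
  ultimately show "- x \<in> X10 Y" using grpD(3)[OF gY] by (simp add: X10_def Rsp_def)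
qed

lemma H_grp: "(\<And>t. grp (Y t)) \<Longrightarrow> grp (H'sp Y i)"
  unfolding grp_def H'sp_def Rsp_def by auto

lemma G_grp: "(\<And>t. grp (Y t)) \<Longrightarrow> (\<And>t. grp (X t)) \<Longrightarrow> grp (G'sp X Y i)"
  unfolding grp_def G'sp_def Rsp_def by auto

lemma nu_setup:
  assumes gX: "\<And>t. grp (X t)" and gY: "\<And>t. grp (Y t)"
  shows "evsetup (X10 Y) (\<lambda>i. H'sp Y i \<inter> X10 Y) (\<lambda>i. G'sp X Y i \<inter> X10 Y)"
proof
  show "grp (X10 Y)" by (rule X10_grp[OF gY])
  show "grp (H'sp Y i \<inter> X10 Y)" for i by (intro grp_int H_grp X10_grp gY)
  show "grp (G'sp X Y i \<inter> X10 Y)" for i by (intro grp_int G_grp X10_grp gY gX)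
  show "H'sp Y i \<inter> X10 Y \<subseteq> G'sp X Y i \<inter> X10 Y" for i
    using grpD(1)[OF gX] by (auto simp: H'sp_def G'sp_def)
  show "G'sp X Y i \<inter> X10 Y \<subseteq> X10 Y" for i by auto
qed

context
  fixes X Y :: "ix \<Rightarrow> 'v::ab_group_add set"
  assumes gX: "\<And>t. grp (X t)" and gY: "\<And>t. grp (Y t)"
begin

interpretation N: evsetup "X10 Y" "\<lambda>i. H'sp Y i \<inter> X10 Y" "\<lambda>i. G'sp X Y i \<inter> X10 Y"
  by (rule nu_setup[of X Y, OF gX gY])

lemma X10g: "grp (X10 Y)" using X10_grp gY by blast
lemma Rg: "grp (Rsp Y)" using Rsp_grp gY by blast
lemma nu_grp: "grp (nu1 X Y a)" unfolding nu1_def by (rule N.ev_grp)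
lemma nu_X10: "nu1 X Y a \<subseteq> X10 Y" unfolding nu1_def by (rule N.ev_T)
lemma nu_mono: "leD a b \<Longrightarrow> nu1 X Y a \<subseteq> nu1 X Y b" unfolding nu1_def by (rule N.ev_mono)

lemma psi_char: "psi X Y i a = {\<eta> \<in> Rsp Y. \<exists>\<zeta>\<in>nu1 X Y a. \<eta> i1 + \<eta> i2 + \<eta> i3 = \<zeta> i}"
proof
  show "psi X Y i a \<subseteq> {\<eta> \<in> Rsp Y. \<exists>\<zeta>\<in>nu1 X Y a. \<eta> i1 + \<eta> i2 + \<eta> i3 = \<zeta> i}"
  proof
    fix \<eta> assume "\<eta> \<in> psi X Y i a"
    then obtain \<xi> g where e1: "\<eta> = \<xi> + g" "\<xi> \<in> X10 Y" "g \<in> Gsp Y i \<inter> ssum (H'sp Y i) (nu1 X Y a)"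
      unfolding psi_def by (rule ssumE)
    then obtain h \<zeta> where e2: "g = h + \<zeta>" "h \<in> H'sp Y i" "\<zeta> \<in> nu1 X Y a"
      by (meson IntD2 ssumE)
    have gG: "g \<in> Gsp Y i" using e1(3) by blast
    have s: "\<xi> i1 + \<xi> i2 + \<xi> i3 = 0" using e1(2) by (simp add: X10_def)
    have gi: "g i = \<zeta> i" using e2(1,2) by (simp add: H'sp_def)
    have g0: "\<And>t. t \<noteq> i \<Longrightarrow> g t = 0" using gG by (simp add: Gsp_def)
    have gs: "g i1 + g i2 + g i3 = g i" using g0 by (cases i) auto
    have "\<eta> i1 + \<eta> i2 + \<eta> i3 = (\<xi> i1 + \<xi> i2 + \<xi> i3) + (g i1 + g i2 + g i3)"
      unfolding e1(1) by (simp add: algebra_simps)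
    then have "\<eta> i1 + \<eta> i2 + \<eta> i3 = \<zeta> i" using s gi gs by simp
    moreover have "\<eta> \<in> Rsp Y"
    proof -
      have "g t \<in> Y t" for t
      proof (cases "t = i")
        case True then show ?thesis using gG by (simp add: Gsp_def)
      next
        case False then show ?thesis using g0 grpD(1)[OF gY] by simp
      qed
      then have "g \<in> Rsp Y" by (simp add: Rsp_def)
      moreover have "\<xi> \<in> Rsp Y" using e1(2) by (simp add: X10_def)
      ultimately show ?thesis using e1(1) grpD(2)[OF Rg] by simp
    qed
    ultimately show "\<eta> \<in> {\<eta> \<in> Rsp Y. \<exists>\<zeta>\<in>nu1 X Y a. \<eta> i1 + \<eta> i2 + \<eta> i3 = \<zeta> i}"
      using e2(3) by blast
  qed
next
  show "{\<eta> \<in> Rsp Y. \<exists>\<zeta>\<in>nu1 X Y a. \<eta> i1 + \<eta> i2 + \<eta> i3 = \<zeta> i} \<subseteq> psi X Y i a"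
  proof
    fix \<eta> assume "\<eta> \<in> {\<eta> \<in> Rsp Y. \<exists>\<zeta>\<in>nu1 X Y a. \<eta> i1 + \<eta> i2 + \<eta> i3 = \<zeta> i}"
    then obtain \<zeta> where e: "\<eta> \<in> Rsp Y" "\<zeta> \<in> nu1 X Y a" "\<eta> i1 + \<eta> i2 + \<eta> i3 = \<zeta> i" by blast
    have "\<zeta> \<in> X10 Y" using nu_X10 e(2) by blast
    then have zR: "\<zeta> \<in> Rsp Y" by (simp add: X10_def)
    define g where "g = (\<lambda>t. if t = i then \<zeta> i else 0)"
    define h where "h = g - \<zeta>"
    define \<xi> where "\<xi> = \<eta> - g"
    have "g t \<in> Y t" for t using zR grpD(1)[OF gY] by (simp add: g_def Rsp_def)
    then have gR: "g \<in> Rsp Y" by (simp add: Rsp_def)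
    have "g \<in> Gsp Y i" using zR by (simp add: g_def Gsp_def Rsp_def)
    moreover have "h \<in> H'sp Y i"
    proof -
      have "h \<in> Rsp Y" unfolding h_def by (rule grpD(4)[OF Rg gR zR])
      moreover have "h i = 0" by (simp add: h_def g_def)
      ultimately show ?thesis by (simp add: H'sp_def)
    qed
    moreover have "g = h + \<zeta>" by (simp add: h_def)
    ultimately have gI: "g \<in> Gsp Y i \<inter> ssum (H'sp Y i) (nu1 X Y a)" using e(2) by (blast intro: ssumI)
    moreover have "\<xi> \<in> X10 Y"
    proof -
      have "\<xi> \<in> Rsp Y" unfolding \<xi>_def by (rule grpD(4)[OF Rg e(1) gR])
      moreover have gs: "g i1 + g i2 + g i3 = \<zeta> i" by (cases i) (simp_all add: g_def)
      moreover have "\<xi> i1 + \<xi> i2 + \<xi> i3 = (\<eta> i1 + \<eta> i2 + \<eta> i3) - (g i1 + g i2 + g i3)"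
        by (simp add: \<xi>_def algebra_simps)
      ultimately show ?thesis using e(3) by (simp add: X10_def)
    qed
    moreover have "\<eta> = \<xi> + g" by (simp add: \<xi>_def)
    ultimately show "\<eta> \<in> psi X Y i a" unfolding psi_def by (blast intro: ssumI)
  qed
qed

lemma nu_Xg: "nu1 X Y (Xg i) = H'sp Y i \<inter> X10 Y" by (simp add: nu1_def)

lemma nu_meet: "nu1 X Y (Meet a b) = nu1 X Y a \<inter> nu1 X Y b" by (simp add: nu1_def)
lemma nu_join: "nu1 X Y (Join a b) = ssum (nu1 X Y a) (nu1 X Y b)" by (simp add: nu1_def)

lemma psi_meet1:
  assumes "leD (Xg i) a"
  shows "psi X Y i (Meet a b) = psi X Y i a \<inter> psi X Y i b"
proof
  show "psi X Y i (Meet a b) \<subseteq> psi X Y i a \<inter> psi X Y i b"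
    unfolding psi_char nu_meet by blast
next
  have sub: "H'sp Y i \<inter> X10 Y \<subseteq> nu1 X Y a" using nu_mono[OF assms] nu_Xg by simp
  have key: "\<exists>\<zeta>\<in>nu1 X Y a \<inter> nu1 X Y b. s = \<zeta> i"
    if "\<zeta> \<in> nu1 X Y a" "\<zeta>' \<in> nu1 X Y b" "s = \<zeta> i" "s = \<zeta>' i" for s \<zeta> \<zeta>'
  proof -
    have "\<zeta> - \<zeta>' \<in> X10 Y" using grpD(4)[OF X10g] nu_X10 that(1,2) by blast
    moreover have "(\<zeta> - \<zeta>') i = 0" using that by simp
    moreover have "X10 Y \<subseteq> Rsp Y" by (auto simp: X10_def)
    ultimately have "\<zeta> - \<zeta>' \<in> H'sp Y i \<inter> X10 Y" by (auto simp: H'sp_def)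
    then have "\<zeta> - \<zeta>' \<in> nu1 X Y a" using sub by blast
    then have "\<zeta> - (\<zeta> - \<zeta>') \<in> nu1 X Y a" using grpD(4)[OF nu_grp] that(1) by blast
    then have "\<zeta>' \<in> nu1 X Y a" by simp
    then show ?thesis using that by blast
  qed
  show "psi X Y i a \<inter> psi X Y i b \<subseteq> psi X Y i (Meet a b)"
  proof
    fix \<eta> assume "\<eta> \<in> psi X Y i a \<inter> psi X Y i b"
    then obtain \<zeta> \<zeta>' where "\<eta> \<in> Rsp Y" "\<zeta> \<in> nu1 X Y a" "\<zeta>' \<in> nu1 X Y b"
      "\<eta> i1 + \<eta> i2 + \<eta> i3 = \<zeta> i" "\<eta> i1 + \<eta> i2 + \<eta> i3 = \<zeta>' i"
      unfolding psi_char by blast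
    with key[of \<zeta> \<zeta>' "\<eta> i1 + \<eta> i2 + \<eta> i3"] show "\<eta> \<in> psi X Y i (Meet a b)"
      unfolding psi_char nu_meet by blast
  qed
qed

lemma psi_meet2:
  assumes "leD (Xg i) b"
  shows "psi X Y i (Meet a b) = psi X Y i a \<inter> psi X Y i b"
proof -
  have "nu1 X Y (Meet a b) = nu1 X Y (Meet b a)" unfolding nu_meet by blast
  then have "psi X Y i (Meet a b) = psi X Y i (Meet b a)" unfolding psi_char by simp
  then show ?thesis using psi_meet1[OF assms, of a] by blast
qed

lemma psi_join: "psi X Y i (Join a b) = ssum (psi X Y i a) (psi X Y i b)"
proof
  show "psi X Y i (Join a b) \<subseteq> ssum (psi X Y i a) (psi X Y i b)"
  proof
    fix \<eta> assume "\<eta> \<in> psi X Y i (Join a b)"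
    then obtain \<zeta> where e: "\<eta> \<in> Rsp Y" "\<zeta> \<in> ssum (nu1 X Y a) (nu1 X Y b)"
      "\<eta> i1 + \<eta> i2 + \<eta> i3 = \<zeta> i" unfolding psi_char nu_join by blast
    then obtain p q where pq: "\<zeta> = p + q" "p \<in> nu1 X Y a" "q \<in> nu1 X Y b" by (meson ssumE)
    have "q \<in> X10 Y" using nu_X10 pq(3) by blast
    then have qR: "q \<in> Rsp Y" by (simp add: X10_def)
    define \<eta>2 where "\<eta>2 = (\<lambda>t. if t = i then q i else 0)"
    define \<eta>1 where "\<eta>1 = \<eta> - \<eta>2"
    have "\<eta>2 t \<in> Y t" for t using qR grpD(1)[OF gY] by (simp add: \<eta>2_def Rsp_def)
    then have R2: "\<eta>2 \<in> Rsp Y" by (simp add: Rsp_def)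
    have s2: "\<eta>2 i1 + \<eta>2 i2 + \<eta>2 i3 = q i" by (cases i) (simp_all add: \<eta>2_def)
    have R1: "\<eta>1 \<in> Rsp Y" unfolding \<eta>1_def by (rule grpD(4)[OF Rg e(1) R2])
    have "\<eta>1 i1 + \<eta>1 i2 + \<eta>1 i3 = (\<eta> i1 + \<eta> i2 + \<eta> i3) - (\<eta>2 i1 + \<eta>2 i2 + \<eta>2 i3)"
      by (simp add: \<eta>1_def algebra_simps)
    then have s1: "\<eta>1 i1 + \<eta>1 i2 + \<eta>1 i3 = p i" using e(3) s2 pq(1) by simp
    have "\<eta>1 \<in> psi X Y i a" unfolding psi_char using R1 s1 pq(2) by blast
    moreover have "\<eta>2 \<in> psi X Y i b" unfolding psi_char using R2 s2 pq(3) by blast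
    moreover have "\<eta> = \<eta>1 + \<eta>2" by (simp add: \<eta>1_def)
    ultimately show "\<eta> \<in> ssum (psi X Y i a) (psi X Y i b)" by (blast intro: ssumI)
  qed
next
  show "ssum (psi X Y i a) (psi X Y i b) \<subseteq> psi X Y i (Join a b)"
  proof
    fix \<eta> assume "\<eta> \<in> ssum (psi X Y i a) (psi X Y i b)"
    then obtain \<eta>1 \<eta>2 where e: "\<eta> = \<eta>1 + \<eta>2" "\<eta>1 \<in> psi X Y i a" "\<eta>2 \<in> psi X Y i b" by (meson ssumE)
    obtain p where p: "\<eta>1 \<in> Rsp Y" "p \<in> nu1 X Y a" "\<eta>1 i1 + \<eta>1 i2 + \<eta>1 i3 = p i"
      using e(2) unfolding psi_char by blast
    obtain q where q: "\<eta>2 \<in> Rsp Y" "q \<in> nu1 X Y b" "\<eta>2 i1 + \<eta>2 i2 + \<eta>2 i3 = q i"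
      using e(3) unfolding psi_char by blast
    have "\<eta> \<in> Rsp Y" using e(1) grpD(2)[OF Rg p(1) q(1)] by simp
    moreover have "p + q \<in> nu1 X Y (Join a b)" unfolding nu_join using p(2) q(2) by (blast intro: ssumI)
    moreover have "\<eta> i1 + \<eta> i2 + \<eta> i3 = (\<eta>1 i1 + \<eta>1 i2 + \<eta>1 i3) + (\<eta>2 i1 + \<eta>2 i2 + \<eta>2 i3)"
      unfolding e(1) by (simp add: algebra_simps)
    then have "\<eta> i1 + \<eta> i2 + \<eta> i3 = (p + q) i" using p(3) q(3) by simp
    ultimately show "\<eta> \<in> psi X Y i (Join a b)" unfolding psi_char by blast
  qed
qed

lemma psi_xg: "psi X Y i (Join b (Xg i)) = psi X Y i b"
proof -
  have "{\<zeta> i |\<zeta>. \<zeta> \<in> nu1 X Y (Join b (Xg i))} = {\<zeta> i |\<zeta>. \<zeta> \<in> nu1 X Y b}"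
  proof safe
    fix \<zeta> assume "\<zeta> \<in> nu1 X Y (Join b (Xg i))"
    then obtain p h where "\<zeta> = p + h" "p \<in> nu1 X Y b" "h \<in> H'sp Y i \<inter> X10 Y"
      unfolding nu_join nu_Xg by (meson ssumE)
    then have "\<zeta> i = p i" "p \<in> nu1 X Y b" by (auto simp: H'sp_def)
    then show "\<exists>\<zeta>'. \<zeta> i = \<zeta>' i \<and> \<zeta>' \<in> nu1 X Y b" by blast
  next
    fix \<zeta> assume "\<zeta> \<in> nu1 X Y b"
    moreover have "0 \<in> nu1 X Y (Xg i)" by (rule grpD(1)[OF nu_grp])
    ultimately have "\<zeta> \<in> nu1 X Y (Join b (Xg i))" unfolding nu_join
      using ssumI[of \<zeta> "nu1 X Y b" 0 "nu1 X Y (Xg i)" \<zeta>] by simp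
    then show "\<exists>\<zeta>'. \<zeta> i = \<zeta>' i \<and> \<zeta>' \<in> nu1 X Y (Join b (Xg i))" by blast
  qed
  then show ?thesis unfolding psi_char by blast
qed

end

lemma x_le_a: "leD (Xg i) (a_el i j n)"
  by (cases n) (auto intro: leD_top leD_join1)

lemma x_le_a2: "leD (Xg j) (a_el i j n)"
proof (cases n)
  case 0 then show ?thesis by (simp add: leD_top)
next
  case (Suc m)
  have "leD (Xg j) (Meet (Yg j) (a_el j (third i j) m))"
    by (rule leD_meet_glb[OF leD_gen x_le_a])
  then show ?thesis unfolding Suc by (auto intro: leD_trans leD_join2)
qed

lemma x_le_A: "leD (Xg i) (A_el i j n)"
proof (cases n)
  case 0 then show ?thesis by (simp add: leD_top)
next
  case (Suc m)
  then show ?thesis by (auto intro: leD_trans[OF leD_gen leD_join1])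
qed

theorem mainTheorem6:
  fixes scale :: "'k::field \<Rightarrow> 'v::ab_group_add \<Rightarrow> 'v"
    and X0 :: "'v set" and X Y :: "ix \<Rightarrow> 'v set" and i j k :: ix
  assumes vs: "vector_space scale"
    and X0_sub: "module.subspace scale X0"
    and X0_fin: "\<exists>B. finite B \<and> B \<subseteq> X0 \<and> module.span scale B = X0"
    and gens: "\<forall>t. module.subspace scale (X t) \<and> module.subspace scale (Y t)
                  \<and> X t \<subseteq> Y t \<and> Y t \<subseteq> X0"
    and ijk: "i \<noteq> j" "j \<noteq> k" "i \<noteq> k"
  shows "(\<forall>a b.
            (leD (Join (Xg i) (Meet (Xg j) (Xg k))) a
             \<or> leD (Join (Xg i) (Meet (Xg j) (Xg k))) b
             \<or> (leD (Xg i) a \<and> leD (Meet (Xg j) (Xg k)) b)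
             \<or> (leD (Xg i) b \<and> leD (Meet (Xg j) (Xg k)) a))
          \<longrightarrow> psi X Y i (Meet a b) = psi X Y i a \<inter> psi X Y i b
            \<and> psi X Y i (Join a b) = ssum (psi X Y i a) (psi X Y i b))
       \<and> (\<forall>n b.
            psi X Y i (Meet b (a_el i j n)) = psi X Y i b \<inter> psi X Y i (a_el i j n)
          \<and> psi X Y j (Meet b (a_el i j n)) = psi X Y j b \<inter> psi X Y j (a_el i j n)
          \<and> psi X Y i (Meet b (A_el i j n)) = psi X Y i b \<inter> psi X Y i (A_el i j n))
       \<and> (\<forall>b. psi X Y i (Join b (Xg i)) = psi X Y i b)"
proof -
  interpret V: vector_space scale by (rule vs)
  have sg: "grp S" if "module.subspace scale S" for S
    using that unfolding grp_def by (auto intro: V.subspace_0 V.subspace_add V.subspace_neg)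
  have gX: "\<And>t. grp (X t)" using gens sg by blast
  have gY: "\<And>t. grp (Y t)" using gens sg by blast
  have M: "psi X Y i (Meet a b) = psi X Y i a \<inter> psi X Y i b"
    if "leD (Xg i) a \<or> leD (Xg i) b" for a b
    using that psi_meet1[of X Y, OF gX gY] psi_meet2[of X Y, OF gX gY] by blast
  have J: "psi X Y i' (Join a b) = ssum (psi X Y i' a) (psi X Y i' b)" for i' a b
    by (rule psi_join[of X Y, OF gX gY])
  have P1: "leD (Xg i) a \<or> leD (Xg i) b"
    if "leD (Join (Xg i) (Meet (Xg j) (Xg k))) a
             \<or> leD (Join (Xg i) (Meet (Xg j) (Xg k))) b
             \<or> (leD (Xg i) a \<and> leD (Meet (Xg j) (Xg k)) b)
             \<or> (leD (Xg i) b \<and> leD (Meet (Xg j) (Xg k)) a)" for a b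
    using that leD_trans[OF leD_join1] by blast
  show ?thesis
  proof (intro conjI allI impI)
    fix a b
    assume h: "leD (Join (Xg i) (Meet (Xg j) (Xg k))) a
             \<or> leD (Join (Xg i) (Meet (Xg j) (Xg k))) b
             \<or> (leD (Xg i) a \<and> leD (Meet (Xg j) (Xg k)) b)
             \<or> (leD (Xg i) b \<and> leD (Meet (Xg j) (Xg k)) a)"
    show "psi X Y i (Meet a b) = psi X Y i a \<inter> psi X Y i b" by (rule M[OF P1[OF h]])
    show "psi X Y i (Join a b) = ssum (psi X Y i a) (psi X Y i b)" by (rule J)
  next
    fix n b
    show "psi X Y i (Meet b (a_el i j n)) = psi X Y i b \<inter> psi X Y i (a_el i j n)"
      by (rule psi_meet2[of X Y, OF gX gY x_le_a])
    show "psi X Y j (Meet b (a_el i j n)) = psi X Y j b \<inter> psi X Y j (a_el i j n)"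
      by (rule psi_meet2[of X Y, OF gX gY x_le_a2])
    show "psi X Y i (Meet b (A_el i j n)) = psi X Y i b \<inter> psi X Y i (A_el i j n)"
      by (rule psi_meet2[of X Y, OF gX gY x_le_A])
  next
    fix b
    show "psi X Y i (Join b (Xg i)) = psi X Y i b" by (rule psi_xg[of X Y, OF gX gY])
  qed
qed

end
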